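(* Let $k\ge 4$, $n=2k-1$, $\eta=(\eta_1<\dots<\eta_l)\in\mathbb{D}_k\setminus\{(3,k-3)\}$, and let $Y_{2\eta^*}$ be the Young diagram whose main diagonal consists of exactly the cells $c_{1,1},\dots,c_{l+1,l+1}$ and which satisfies $h_{1,1}=2n-4$, $h_{i,i}=2\eta_{l-(i-2)}$ for $2\le i\le l+1$, and $a(c_{i,i})=l(c_{i,i})+1$ for $1\le i\le l+1$. Let $\lambda$ be the partition whose parts are the hook lengths of the first-column cells of $Y_{2\eta^*}$. Then: (1) $\lambda$ has exactly $n-2$ parts; (2) its largest part is $\lambda_{n-2}=2n-4$; (3) its number of missing parts is $\#\mathcal{M}_\lambda=n-2$.
   Context: $\mathbb{D}_N$ is the set of partitions of $N$ into distinct parts, i.e. sequences $(\eta_1<\dots<\eta_l)$ of positive integers with sum $N$ and $l\ge 2$. For a partition $\lambda=(\lambda_1<\dots<\lambda_t)$ into distinct parts, $\mathcal{M}_\lambda=\{1,\dots,\lambda_t\}\setminus\{\lambda_1,\dots,\lambda_t\}$. Young diagrams are in English convention: rows top to bottom, columns left to right, $c_{i,j}$ the cell in row $i$, column $j$; arm $a(c_{i,j})$ = number of cells to its right in its row, leg $l(c_{i,j})$ = number of cells below it in its column, hook length $h_{i,j}=a+l+1$. *)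

theory Defs
  imports Main
begin

definition distinct_partitions :: "nat \<Rightarrow> nat list set" ("\<D>") where
  "\<D> N = {eta. sorted_wrt (<) eta \<and> (\<forall>x\<in>set eta. 0 < x) \<and> sum_list eta = N \<and> 2 \<le> length eta}"

definition missing_parts :: "nat set \<Rightarrow> nat set" where
  "missing_parts L = {1..Max L} - L"

(* Young diagram (English convention) as a finite set of cells (i,j), i = row, j = column,
   both 1-indexed, closed downwards / leftwards. *)
definition young_diagram :: "(nat \<times> nat) set \<Rightarrow> bool" where
  "young_diagram Y \<longleftrightarrow> finite Y \<and>
     (\<forall>(i,j)\<in>Y. 1 \<le> i \<and> 1 \<le> j \<and>
        (\<forall>i' j'. 1 \<le> i' \<and> i' \<le> i \<and> 1 \<le> j' \<and> j' \<le> j \<longrightarrow> (i',j') \<in> Y))"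

definition arm :: "(nat \<times> nat) set \<Rightarrow> nat \<Rightarrow> nat \<Rightarrow> nat" where
  "arm Y i j = card {j'. j < j' \<and> (i,j') \<in> Y}"

definition leg :: "(nat \<times> nat) set \<Rightarrow> nat \<Rightarrow> nat \<Rightarrow> nat" where
  "leg Y i j = card {i'. i < i' \<and> (i',j) \<in> Y}"

definition hook :: "(nat \<times> nat) set \<Rightarrow> nat \<Rightarrow> nat \<Rightarrow> nat" where
  "hook Y i j = arm Y i j + leg Y i j + 1"

definition first_column_hooks :: "(nat \<times> nat) set \<Rightarrow> nat set" where
  "first_column_hooks Y = {hook Y i 1 | i. (i,1) \<in> Y}"

end

theory Submission
  imports Defs
begin

lemma yd_closed:
  assumes "young_diagram Y" "(i,j) \<in> Y" "1 \<le> i'" "i' \<le> i" "1 \<le> j'" "j' \<le> j"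
  shows "(i',j') \<in> Y"
  using assms unfolding young_diagram_def by blast

lemma yd_pos:
  assumes "young_diagram Y" "(i,j) \<in> Y"
  shows "1 \<le> i \<and> 1 \<le> j"
  using assms unfolding young_diagram_def by blast

lemma col_eq:
  assumes Y: "young_diagram Y" and c: "(1,1) \<in> Y"
  defines "m \<equiv> Max {i. (i,1) \<in> Y}"
  shows "{i. (i,1) \<in> Y} = {1..m}"
proof -
  have fin: "finite Y" using Y unfolding young_diagram_def by blast
  have "{i. (i,1) \<in> Y} \<subseteq> fst ` Y" by force
  hence finC: "finite {i. (i,1) \<in> Y}" using fin finite_subset by blast
  have ne: "{i. (i,1) \<in> Y} \<noteq> {}" using c by blast
  have mC: "(m,1) \<in> Y" using Max_in[OF finC ne] unfolding m_def by simp
  show ?thesis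
  proof
    show "{i. (i,1) \<in> Y} \<subseteq> {1..m}"
      using yd_pos[OF Y] Max_ge[OF finC] unfolding m_def by auto
    show "{1..m} \<subseteq> {i. (i,1) \<in> Y}"
      using yd_closed[OF Y mC] by auto
  qed
qed

lemma leg_col:
  assumes Y: "young_diagram Y" and c: "(1,1) \<in> Y"
  shows "leg Y i 1 = Max {i. (i,1) \<in> Y} - i"
proof -
  define m where "m = Max {i. (i,1) \<in> Y}"
  have C: "{i. (i,1) \<in> Y} = {1..m}" using col_eq[OF Y c] m_def by simp
  have "{i'. i < i' \<and> (i',1) \<in> Y} = {Suc i..m}" using C by auto
  thus ?thesis unfolding leg_def m_def by simp
qed

lemma arm_mono:
  assumes Y: "young_diagram Y" and "1 \<le> i" "i \<le> i2"
  shows "arm Y i2 1 \<le> arm Y i 1"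
proof -
  have fin: "finite Y" using Y unfolding young_diagram_def by blast
  have "{j'. 1 < j' \<and> (i,j') \<in> Y} \<subseteq> snd ` Y" by force
  hence f: "finite {j'. 1 < j' \<and> (i,j') \<in> Y}" using fin finite_subset by blast
  have "{j'. 1 < j' \<and> (i2,j') \<in> Y} \<subseteq> {j'. 1 < j' \<and> (i,j') \<in> Y}"
    using yd_closed[OF Y] assms by auto
  thus ?thesis unfolding arm_def using card_mono[OF f] by blast
qed

theorem corollary3p16:
  fixes k n l :: nat and eta :: "nat list" and Y :: "(nat \<times> nat) set"
  assumes "4 \<le> k"
    and "n = 2 * k - 1"
    and "eta \<in> \<D> k - {[3, k - 3]}"
    and "l = length eta"
    and "young_diagram Y"
    and "\<forall>i\<ge>1. (i,i) \<in> Y \<longleftrightarrow> i \<le> l + 1"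
    and "hook Y 1 1 = 2 * n - 4"
    and "\<forall>i. 2 \<le> i \<and> i \<le> l + 1 \<longrightarrow> hook Y i i = 2 * (eta ! (l - (i - 2) - 1))"
    and "\<forall>i. 1 \<le> i \<and> i \<le> l + 1 \<longrightarrow> arm Y i i = leg Y i i + 1"
  shows "card (first_column_hooks Y) = n - 2
       \<and> Max (first_column_hooks Y) = 2 * n - 4
       \<and> card (missing_parts (first_column_hooks Y)) = n - 2"
proof -
  note Y = assms(5)
  have c: "(1,1) \<in> Y" using assms(6) by auto
  define m where "m = Max {i. (i,1) \<in> Y}"
  have C: "{i. (i,1) \<in> Y} = {1..m}" using col_eq[OF Y c] m_def by simp
  have leg: "\<And>i. leg Y i 1 = m - i" using leg_col[OF Y c] m_def by simp
  have a11: "arm Y 1 1 = leg Y 1 1 + 1" using assms(9) by auto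
  have "leg Y 1 1 = n - 3" using a11 assms(7) assms(1,2) unfolding hook_def by simp
  hence mv: "m = n - 2" using leg[of 1] assms(1,2) by simp
  define h where "h = (\<lambda>i. hook Y i 1)"
  have H: "first_column_hooks Y = h ` {1..m}"
    unfolding first_column_hooks_def h_def using C by auto
  have dec: "h i2 < h i" if "1 \<le> i" "i < i2" "i2 \<le> m" for i i2
    using arm_mono[OF Y, of i i2] that leg[of i] leg[of i2] unfolding h_def hook_def by simp
  have inj: "inj_on h {1..m}"
  proof (rule inj_onI)
    fix x y assume "x \<in> {1..m}" "y \<in> {1..m}" "h x = h y"
    thus "x = y" using dec[of x y] dec[of y x] by (cases x y rule: linorder_cases) auto
  qed
  have card: "card (first_column_hooks Y) = n - 2" using H card_image[OF inj] mv by simp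
  have le: "h i \<le> h 1" if "i \<in> {1..m}" for i
    using that dec[of 1 i] by (cases "i = 1") auto
  have m1: "1 \<in> {1..m}" using mv assms(1,2) by simp
  have mx: "Max (first_column_hooks Y) = 2 * n - 4"
    unfolding H
  proof (rule Max_eqI)
    show "finite (h ` {1..m})" by simp
    show "\<And>y. y \<in> h ` {1..m} \<Longrightarrow> y \<le> 2 * n - 4" using le assms(7) unfolding h_def by auto
    have "h 1 \<in> h ` {1..m}" using m1 by blast
    thus "2 * n - 4 \<in> h ` {1..m}" using assms(7) unfolding h_def by simp
  qed
  have pos: "\<And>x. x \<in> first_column_hooks Y \<Longrightarrow> 1 \<le> x"
    unfolding first_column_hooks_def hook_def by auto
  have sub: "first_column_hooks Y \<subseteq> {1..2*n-4}"
  proof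
    fix x assume x: "x \<in> first_column_hooks Y"
    have "finite (first_column_hooks Y)" unfolding H by simp
    hence "x \<le> 2*n-4" using Max_ge[of "first_column_hooks Y" x] x mx by simp
    thus "x \<in> {1..2*n-4}" using pos[OF x] by simp
  qed
  have "card (missing_parts (first_column_hooks Y)) = card {1..2*n-4} - card (first_column_hooks Y)"
    unfolding missing_parts_def mx using sub card_Diff_subset[OF finite_subset[OF sub]] by simp
  hence "card (missing_parts (first_column_hooks Y)) = n - 2" using card assms(1,2) by simp
  thus ?thesis using card mx by simp
qed

end
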